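(* Let $\Sigma=(I,X,\mathcal U,\phi,Y,h)$ be a forward complete control system with outputs. Then the following are equivalent: (1) $\Sigma$ is OUAG and BORS; (2) $\Sigma$ is OGUAG and OUGB; (3) $\Sigma$ is OCAG. Moreover, any of these properties implies that $\Sigma$ is IOpS.
   Context: Let $I\in\{\mathbb N_0,\mathbb R_0^+\}$. A forward complete control system with outputs $\Sigma=(I,X,\mathcal U,\phi,Y,h)$ consists of: a normed space $(X,\|\cdot\|_X)$; a vector space $U$ and a normed linear subspace $(\mathcal U,\|\cdot\|_{\mathcal U})$ of $\{u:I\to U\}$ such that for all $u\in\mathcal U$ and $\tau\in I$, $u(\cdot+\tau)\in\mathcal U$ with $\|u(\cdot+\tau)\|_{\mathcal U}\le\|u\|_{\mathcal U}$, and for all $t_2\ge t_1\ge 0$ the function $u|_{[t_1,t_2]}$ (equal to $u$ on $[t_1,t_2]$, $0$ elsewhere) lies in $\mathcal U$ with $\|u|_{[t_1,t_2]}\|_{\mathcal U}\le\|u\|_{\mathcal U}$; a map $\phi:I\times X\times\mathcal U\to X$ with $\phi(0,x,u)=x$, causality (if $u,\tilde u$ agree on $[0,t]$ then $\phi(t,x,u)=\phi(t,x,\tilde u)$), and cocycle property $\phi(t+s,x,u)=\phi(s,\phi(t,x,u),u(t+\cdot))$; a normed space $Y$ and $h:X\times U\to Y$. Write $y(t,x,u)=h(\phi(t,x,u),u(t))$, $B_r=\{x:\|x\|_X<r\}$, $B_{r,\mathcal U}=\{u:\|u\|_{\mathcal U}<r\}$. $\mathcal K,\mathcal K_\infty,\mathcal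 L,\mathcal{KL}$ are the standard comparison function classes ($\mathcal K$: continuous, strictly increasing, zero at zero; $\mathcal K_\infty$: unbounded $\mathcal K$; $\mathcal{KL}$: $\mathcal K$ in first argument, continuous decreasing to $0$ in the second). OUAG: $\exists\gamma\in\mathcal K_\infty$ such that for all $\varepsilon,r,s>0$ there is $\tau\in I$ with $\|y(t,x,u)\|_Y\le\varepsilon+\gamma(\|u\|_{\mathcal U})$ for all $x\in B_r,u\in B_{s,\mathcal U},t\ge\tau$. OGUAG: $\exists\gamma\in\mathcal K_\infty$ such that for all $\varepsilon,r>0$ there is $\tau\in I$ with $\|y(t,x,u)\|_Y\le\varepsilon+\gamma(\|u\|_{\mathcal U})$ for all $x\in B_r,u\in\mathcal U,t\ge\tau$. BORS: for all $C>0,\tau\in I$: $\sup\{\|y(t,x,u)\|_Y:\|x\|_X<C,\|u\|_{\mathcal U}<C,t<\tau\}<\infty$. OUGB: $\exists\sigma,\gamma\in\mathcal K_\infty,c>0$ with $\|y(t,x,u)\|_Y\le\sigma(\|x\|_X)+\gamma(\|u\|_{\mathcal U})+c$ for all $x,u,t$. OCAG: $\exists\beta\in\mathcal{KL},\gamma\in\mathcal K_\infty,c\ge0$ with $\|y(t,x,u)\|_Y\le\beta(\|x\|_X+c,t)+\gamma(\|u\|_{\mathcal U})$ for all $x,u,t$. IOpS: $\exists\beta\in\mathcal{KL},\gamma\in\mathcal K_\infty,c\ge0$ with $\|y(t,x,u)\|_Y\le\beta(\|x\|_X,t)+\gamma(\|u\|_{\mathcal U})+c$ for all $x,u,t$.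 *)

theory Defs
  imports "HOL-Analysis.Analysis"
begin

definition class_K :: "(real \<Rightarrow> real) \<Rightarrow> bool" where
  "class_K f \<longleftrightarrow> continuous_on {0..} f \<and> strict_mono_on {0..} f \<and> f 0 = 0"

definition class_Kinf :: "(real \<Rightarrow> real) \<Rightarrow> bool" where
  "class_Kinf f \<longleftrightarrow> class_K f \<and> filterlim f at_top at_top"

definition class_L :: "(real \<Rightarrow> real) \<Rightarrow> bool" where
  "class_L g \<longleftrightarrow> continuous_on {0..} g \<and> antimono_on {0..} g \<and> (g \<longlongrightarrow> 0) at_top"

definition class_KL :: "(real \<Rightarrow> real \<Rightarrow> real) \<Rightarrow> bool" where
  "class_KL \<beta> \<longleftrightarrow> (\<forall>t\<ge>0. class_K (\<lambda>r. \<beta> r t)) \<and> (\<forall>r>0. class_L (\<lambda>t. \<beta> r t))"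

text \<open>The time domain I is modelled as a set T of reals, either [0,\<infinity>) or the naturals.
  Inputs are functions real \<Rightarrow> 'u which vanish outside T (so they represent functions T \<Rightarrow> U).\<close>

definition time_domain :: "real set \<Rightarrow> bool" where
  "time_domain T \<longleftrightarrow> T = {0..} \<or> T = range real"

definition shift_input :: "real set \<Rightarrow> (real \<Rightarrow> 'u::real_vector) \<Rightarrow> real \<Rightarrow> (real \<Rightarrow> 'u)" where
  "shift_input T u \<tau> = (\<lambda>t. if t \<in> T then u (t + \<tau>) else 0)"

definition restrict_input :: "(real \<Rightarrow> 'u::real_vector) \<Rightarrow> real \<Rightarrow> real \<Rightarrow> (real \<Rightarrow> 'u)" where
  "restrict_input u t1 t2 = (\<lambda>t. if t1 \<le> t \<and> t \<le> t2 then u t else 0)"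

definition normed_input_space ::
  "real set \<Rightarrow> (real \<Rightarrow> 'u::real_vector) set \<Rightarrow> ((real \<Rightarrow> 'u) \<Rightarrow> real) \<Rightarrow> bool" where
  "normed_input_space T UU nU \<longleftrightarrow>
     (\<forall>u\<in>UU. \<forall>t. t \<notin> T \<longrightarrow> u t = 0) \<and>
     (\<lambda>_. 0) \<in> UU \<and>
     (\<forall>u\<in>UU. \<forall>v\<in>UU. (\<lambda>t. u t + v t) \<in> UU) \<and>
     (\<forall>u\<in>UU. \<forall>c. (\<lambda>t. c *\<^sub>R u t) \<in> UU) \<and>
     (\<forall>u\<in>UU. nU u \<ge> 0) \<and>
     (\<forall>u\<in>UU. nU u = 0 \<longleftrightarrow> u = (\<lambda>_. 0)) \<and>
     (\<forall>u\<in>UU. \<forall>v\<in>UU. nU (\<lambda>t. u t + v t) \<le> nU u + nU v) \<and>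
     (\<forall>u\<in>UU. \<forall>c. nU (\<lambda>t. c *\<^sub>R u t) = \<bar>c\<bar> * nU u)"

definition control_system ::
  "real set \<Rightarrow> (real \<Rightarrow> 'u::real_vector) set \<Rightarrow> ((real \<Rightarrow> 'u) \<Rightarrow> real)
   \<Rightarrow> (real \<Rightarrow> 'x::real_normed_vector \<Rightarrow> (real \<Rightarrow> 'u) \<Rightarrow> 'x) \<Rightarrow> bool" where
  "control_system T UU nU \<phi> \<longleftrightarrow>
     time_domain T \<and> normed_input_space T UU nU \<and>
     (\<forall>u\<in>UU. \<forall>\<tau>\<in>T. shift_input T u \<tau> \<in> UU \<and> nU (shift_input T u \<tau>) \<le> nU u) \<and>
     (\<forall>u\<in>UU. \<forall>t1\<in>T. \<forall>t2\<in>T. t1 \<le> t2 \<longrightarrow>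
         restrict_input u t1 t2 \<in> UU \<and> nU (restrict_input u t1 t2) \<le> nU u) \<and>
     (\<forall>x u. u \<in> UU \<longrightarrow> \<phi> 0 x u = x) \<and>
     (\<forall>t\<in>T. \<forall>x u v. u \<in> UU \<longrightarrow> v \<in> UU \<longrightarrow> (\<forall>s\<in>T. s \<le> t \<longrightarrow> u s = v s)
         \<longrightarrow> \<phi> t x u = \<phi> t x v) \<and>
     (\<forall>t\<in>T. \<forall>s\<in>T. \<forall>x u. u \<in> UU \<longrightarrow>
         \<phi> (t + s) x u = \<phi> s (\<phi> t x u) (shift_input T u t))"

definition sys_output :: "(real \<Rightarrow> 'x \<Rightarrow> (real \<Rightarrow> 'u) \<Rightarrow> 'x) \<Rightarrow> ('x \<Rightarrow> 'u \<Rightarrow> 'y)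
   \<Rightarrow> real \<Rightarrow> 'x \<Rightarrow> (real \<Rightarrow> 'u) \<Rightarrow> 'y" where
  "sys_output \<phi> h t x u = h (\<phi> t x u) (u t)"

definition OUAG where
  "OUAG T UU nU \<phi> h \<longleftrightarrow> (\<exists>\<gamma>. class_Kinf \<gamma> \<and>
     (\<forall>\<epsilon>>0. \<forall>r>0. \<forall>s>0. \<exists>\<tau>\<in>T. \<forall>x u t. norm x < r \<and> u \<in> UU \<and> nU u < s \<and> t \<in> T \<and> t \<ge> \<tau>
        \<longrightarrow> norm (sys_output \<phi> h t x u) \<le> \<epsilon> + \<gamma> (nU u)))"

definition OGUAG where
  "OGUAG T UU nU \<phi> h \<longleftrightarrow> (\<exists>\<gamma>. class_Kinf \<gamma> \<and>
     (\<forall>\<epsilon>>0. \<forall>r>0. \<exists>\<tau>\<in>T. \<forall>x u t. norm x < r \<and> u \<in> UU \<and> t \<in> T \<and> t \<ge> \<tau>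
        \<longrightarrow> norm (sys_output \<phi> h t x u) \<le> \<epsilon> + \<gamma> (nU u)))"

definition BORS where
  "BORS T UU nU \<phi> h \<longleftrightarrow> (\<forall>C>0. \<forall>\<tau>\<in>T. \<exists>M. \<forall>x u t.
     norm x < C \<and> u \<in> UU \<and> nU u < C \<and> t \<in> T \<and> t < \<tau> \<longrightarrow> norm (sys_output \<phi> h t x u) \<le> M)"

definition OUGB where
  "OUGB T UU nU \<phi> h \<longleftrightarrow> (\<exists>\<sigma> \<gamma> c. class_Kinf \<sigma> \<and> class_Kinf \<gamma> \<and> c > 0 \<and>
     (\<forall>x u t. u \<in> UU \<and> t \<in> T \<longrightarrow>
        norm (sys_output \<phi> h t x u) \<le> \<sigma> (norm x) + \<gamma> (nU u) + c))"

definition OCAG where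
  "OCAG T UU nU \<phi> h \<longleftrightarrow> (\<exists>\<beta> \<gamma> c. class_KL \<beta> \<and> class_Kinf \<gamma> \<and> c \<ge> 0 \<and>
     (\<forall>x u t. u \<in> UU \<and> t \<in> T \<longrightarrow>
        norm (sys_output \<phi> h t x u) \<le> \<beta> (norm x + c) t + \<gamma> (nU u)))"

definition IOpS where
  "IOpS T UU nU \<phi> h \<longleftrightarrow> (\<exists>\<beta> \<gamma> c. class_KL \<beta> \<and> class_Kinf \<gamma> \<and> c \<ge> 0 \<and>
     (\<forall>x u t. u \<in> UU \<and> t \<in> T \<longrightarrow>
        norm (sys_output \<phi> h t x u) \<le> \<beta> (norm x) t + \<gamma> (nU u) + c))"

end

theory Submission
  imports Defs
begin

lemma K_nonneg: "class_K f \<Longrightarrow> 0 \<le> r \<Longrightarrow> 0 \<le> f r"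
  unfolding class_K_def
  by (metis atLeast_iff order.order_iff_strict order_refl strict_mono_onD)

lemma K_mono: "class_K f \<Longrightarrow> 0 \<le> a \<Longrightarrow> a \<le> b \<Longrightarrow> f a \<le> f b"
  unfolding class_K_def
  by (metis atLeast_iff order.order_iff_strict order_trans strict_mono_onD)

lemma K_add: "class_K f \<Longrightarrow> class_K g \<Longrightarrow> class_K (\<lambda>r. f r + g r)"
  unfolding class_K_def
  by (auto intro!: continuous_intros strict_mono_onI add_strict_mono dest: strict_mono_onD)

lemma Kinf_add: "class_Kinf f \<Longrightarrow> class_K g \<Longrightarrow> class_Kinf (\<lambda>r. f r + g r)"
  unfolding class_Kinf_def
proof (intro conjI)
  assume a: "class_K f \<and> filterlim f at_top at_top" "class_K g"
  then show "class_K (\<lambda>r. f r + g r)" using K_add by blast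
  have ev: "eventually (\<lambda>r. f r \<le> f r + g r) at_top"
    using eventually_ge_at_top[of 0] by eventually_elim (use K_nonneg a in auto)
  then show "filterlim (\<lambda>r. f r + g r) at_top at_top"
    using filterlim_at_top_mono[OF _ ev] a by blast
qed

lemma Kinf_id: "class_Kinf (\<lambda>r. r)"
  unfolding class_Kinf_def class_K_def
  by (auto intro!: strict_mono_onI filterlim_ident continuous_intros)

lemma K_scale2: "class_K f \<Longrightarrow> class_K (\<lambda>r. f (2*r))"
  unfolding class_K_def
proof (intro conjI)
  assume a: "continuous_on {0..} f \<and> strict_mono_on {0..} f \<and> f 0 = 0"
  show "continuous_on {0..} (\<lambda>r. f (2 * r))"
    by (rule continuous_on_compose2[of "{0..}" f _ "\<lambda>r. 2*r"]) (use a in \<open>auto intro!: continuous_intros\<close>)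
  show "strict_mono_on {0..} (\<lambda>r. f (2 * r))"
  proof (rule strict_mono_onI)
    fix r s :: real
    assume rs: "r \<in> {0..}" "s \<in> {0..}" "r < s"
    show "f (2 * r) < f (2 * s)" using a strict_mono_onD[of "{0..}" f "2 * r" "2 * s"] rs by simp
  qed
  show "f (2*0) = 0" using a by simp
qed

lemma K_split: "class_K f \<Longrightarrow> 0 \<le> a \<Longrightarrow> 0 \<le> b \<Longrightarrow> f (a+b) \<le> f (2*a) + f (2*b)"
proof -
  assume K: "class_K f" and ab: "0 \<le> a" "0 \<le> b"
  show ?thesis
  proof (cases "a \<le> b")
    case True
    then have "f (a+b) \<le> f (2*b)" using K_mono[OF K, of "a+b" "2*b"] ab by simp
    then show ?thesis using K_nonneg[OF K, of "2*a"] ab by simp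
  next
    case False
    then have "f (a+b) \<le> f (2*a)" using K_mono[OF K, of "a+b" "2*a"] ab by simp
    then show ?thesis using K_nonneg[OF K, of "2*b"] ab by simp
  qed
qed

lemma KL_K: "class_KL \<beta> \<Longrightarrow> 0 \<le> t \<Longrightarrow> class_K (\<lambda>r. \<beta> r t)"
  unfolding class_KL_def by blast

lemma KL_antimono: "class_KL \<beta> \<Longrightarrow> 0 \<le> r \<Longrightarrow> 0 \<le> t \<Longrightarrow> t \<le> t' \<Longrightarrow> \<beta> r t' \<le> \<beta> r t"
proof (cases "r = 0")
  case True
  assume "class_KL \<beta>" "0 \<le> t" "t \<le> t'"
  then show ?thesis using True unfolding class_KL_def class_K_def by auto
next
  case False
  assume "class_KL \<beta>" "0 \<le> r" "0 \<le> t" "t \<le> t'"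
  then have "antimono_on {0..} (\<lambda>t. \<beta> r t)" using False unfolding class_KL_def class_L_def by auto
  then show ?thesis using \<open>0 \<le> t\<close> \<open>t \<le> t'\<close> monotone_onD[OF \<open>antimono_on {0..} (\<lambda>t. \<beta> r t)\<close>, of t t'] by auto
qed

lemma KL_scale2: "class_KL \<beta> \<Longrightarrow> class_KL (\<lambda>r t. \<beta> (2*r) t)"
  unfolding class_KL_def using K_scale2 by auto

definition clamp :: "real \<Rightarrow> real" where "clamp x = min 1 (max 0 x)"

lemma clamp_cont[continuous_intros]: "continuous_on S f \<Longrightarrow> continuous_on S (\<lambda>x. clamp (f x))"
  unfolding clamp_def by (intro continuous_intros)

lemma clamp_mono: "x \<le> y \<Longrightarrow> clamp x \<le> clamp y" unfolding clamp_def by auto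
lemma clamp_bounds: "0 \<le> clamp x" "clamp x \<le> 1" unfolding clamp_def by auto
lemma clamp_0: "x \<le> 0 \<Longrightarrow> clamp x = 0" unfolding clamp_def by auto
lemma clamp_1: "1 \<le> x \<Longrightarrow> clamp x = 1" unfolding clamp_def by auto

definition lfs :: "(nat \<Rightarrow> real \<Rightarrow> real) \<Rightarrow> real \<Rightarrow> real" where
  "lfs c s = (\<Sum>k<nat \<lceil>s\<rceil>. c k s)"

lemma lfs_eq:
  assumes z: "\<And>k s. s \<le> real k \<Longrightarrow> c k s = 0" and sN: "s \<le> real N"
  shows "lfs c s = (\<Sum>k<N. c k s)"
proof -
  have "nat \<lceil>s\<rceil> \<le> N" using sN by linarith
  then have "(\<Sum>k<N. c k s) = (\<Sum>k<nat \<lceil>s\<rceil>. c k s)"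
  proof (intro sum.mono_neutral_right)
    show "\<forall>i\<in>{..<N} - {..<nat \<lceil>s\<rceil>}. c i s = 0"
    proof
      fix i assume "i \<in> {..<N} - {..<nat \<lceil>s\<rceil>}"
      then have "s \<le> real i" by auto
      then show "c i s = 0" by (rule z)
    qed
  qed (use \<open>nat \<lceil>s\<rceil> \<le> N\<close> in auto)
  then show ?thesis unfolding lfs_def by simp
qed

lemma lfs_isCont:
  assumes z: "\<And>k s. s \<le> real k \<Longrightarrow> c k s = 0" and cc: "\<And>k. continuous_on UNIV (c k)"
  shows "isCont (lfs c) x"
proof -
  define N where "N = nat \<lceil>x\<rceil> + 1"
  have xN: "x < real N" unfolding N_def by linarith
  have ev: "eventually (\<lambda>s. lfs c s = (\<Sum>k<N. c k s)) (nhds x)"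
    using eventually_nhds_in_open[of "{..<real N}" x] xN
    by (auto elim!: eventually_mono intro!: lfs_eq z)
  have "isCont (\<lambda>s. \<Sum>k<N. c k s) x"
    using cc by (intro continuous_intros) (auto simp: continuous_on_eq_continuous_at)
  then show ?thesis using isCont_cong[OF ev] by simp
qed

lemma lfs_mono:
  assumes z: "\<And>k s. s \<le> real k \<Longrightarrow> c k s = 0" and m: "\<And>k s s'. s \<le> s' \<Longrightarrow> c k s \<le> c k s'"
    and le: "s \<le> s'"
  shows "lfs c s \<le> lfs c s'"
proof -
  have "lfs c s = (\<Sum>k<nat \<lceil>s'\<rceil>. c k s)" by (rule lfs_eq[OF z order_trans[OF le real_nat_ceiling_ge]])
  also have "\<dots> \<le> (\<Sum>k<nat \<lceil>s'\<rceil>. c k s')" by (intro sum_mono m le)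
  finally show ?thesis unfolding lfs_def .
qed


lemma lfs_nonneg: "(\<And>k s. 0 \<le> c k s) \<Longrightarrow> 0 \<le> lfs c s"
  unfolding lfs_def by (intro sum_nonneg) auto

lemma lfs_ge: "(\<And>k s. 0 \<le> c k s) \<Longrightarrow> real n < s \<Longrightarrow> c n s \<le> lfs c s"
  unfolding lfs_def by (intro member_le_sum) (auto, linarith)

lemma Kinf_majorant:
  fixes a :: "nat \<Rightarrow> real"
  assumes a0: "\<And>n. 0 \<le> a n"
  shows "\<exists>\<sigma>. class_Kinf \<sigma> \<and> (\<forall>r n. real n + 1 \<le> r \<longrightarrow> a n \<le> \<sigma> r)"
proof -
  define c where "c = (\<lambda>n s. clamp (s - real n) * a n)"
  have z: "\<And>k s. s \<le> real k \<Longrightarrow> c k s = 0" unfolding c_def by (simp add: clamp_0)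
  have cc: "\<And>k. continuous_on UNIV (c k)" unfolding c_def by (intro continuous_intros)
  have cm: "\<And>k s s'. s \<le> s' \<Longrightarrow> c k s \<le> c k s'" unfolding c_def
    by (intro mult_right_mono clamp_mono a0) auto
  have c0: "\<And>k s. 0 \<le> c k s" unfolding c_def using clamp_bounds a0 by simp
  define \<sigma> where "\<sigma> = (\<lambda>r. r + lfs c r)"
  have K: "class_K \<sigma>" unfolding class_K_def
  proof (intro conjI)
    show "continuous_on {0..} \<sigma>" unfolding \<sigma>_def
      by (intro continuous_at_imp_continuous_on ballI continuous_intros lfs_isCont[OF z cc])
    show "strict_mono_on {0..} \<sigma>" unfolding \<sigma>_def
      by (intro strict_mono_onI add_less_le_mono lfs_mono[OF z cm]) auto
    show "\<sigma> 0 = 0" unfolding \<sigma>_def lfs_def by simp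
  qed
  have "eventually (\<lambda>r. r \<le> \<sigma> r) at_top" unfolding \<sigma>_def
    using lfs_nonneg[OF c0] by simp
  then have "filterlim \<sigma> at_top at_top"
    using filterlim_at_top_mono[OF filterlim_ident] by blast
  moreover have "a n \<le> \<sigma> r" if "real n + 1 \<le> r" for r n
  proof -
    have "c n r = a n" unfolding c_def using that by (simp add: clamp_1)
    moreover have "c n r \<le> lfs c r" using that by (intro lfs_ge c0) linarith
    ultimately show ?thesis using that unfolding \<sigma>_def by simp
  qed
  ultimately show ?thesis using K unfolding class_Kinf_def by blast
qed

lemma geo_sum: "(\<Sum>k<K. B * (1/2::real)^(k+1)) = B * (1 - (1/2)^K)"
  by (induction K) (auto simp: algebra_simps)

lemma L_majorant:
  fixes P :: "real \<Rightarrow> real \<Rightarrow> bool" and T :: "real set" and B :: real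
  assumes B: "0 < B" and PB: "\<And>t. t \<in> T \<Longrightarrow> P t B"
    and Pm: "\<And>t b b'. P t b \<Longrightarrow> b \<le> b' \<Longrightarrow> P t b'"
    and eps: "\<And>\<epsilon>. \<epsilon> > 0 \<Longrightarrow> \<exists>\<tau>. \<forall>t\<in>T. t \<ge> \<tau> \<longrightarrow> P t \<epsilon>"
  shows "\<exists>g. continuous_on UNIV g \<and> antimono g \<and> (\<forall>t. 0 \<le> g t) \<and> (g \<longlongrightarrow> 0) at_top
           \<and> (\<forall>t\<in>T. P t (g t))"
proof -
  define d where "d = (\<lambda>k::nat. B * (1/2::real)^(k+1))"
  have d0: "\<And>k. 0 \<le> d k" unfolding d_def using B by simp
  have "\<forall>j. \<exists>\<tau>. \<forall>t\<in>T. t \<ge> \<tau> \<longrightarrow> P t (d j)"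
    using eps d_def B by simp
  then obtain \<tau> where tau: "\<And>j t. t \<in> T \<Longrightarrow> t \<ge> \<tau> j \<Longrightarrow> P t (d j)" by metis
  define Tk where "Tk = (\<lambda>k. real k + 2 + (\<Sum>j\<le>k. \<bar>\<tau> j\<bar>))"
  have Tk_mono: "Tk k \<le> Tk k'" if "k \<le> k'" for k k'
  proof -
    have "(\<Sum>j\<le>k. \<bar>\<tau> j\<bar>) \<le> (\<Sum>j\<le>k'. \<bar>\<tau> j\<bar>)"
      by (intro sum_mono2) (use that in auto)
    then show ?thesis unfolding Tk_def using that by simp
  qed
  have Tk_ge: "real k + 2 \<le> Tk k" for k unfolding Tk_def by (simp add: sum_nonneg)
  have Tk_tau: "\<tau> k + 2 \<le> Tk k" for k
  proof -
    have "\<bar>\<tau> k\<bar> \<le> (\<Sum>j\<le>k. \<bar>\<tau> j\<bar>)" by (intro member_le_sum) auto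
    then show ?thesis unfolding Tk_def by linarith
  qed
  define c where "c = (\<lambda>k t. d k * clamp (t - Tk k + 1))"
  have z: "\<And>k s. s \<le> real k \<Longrightarrow> c k s = 0" unfolding c_def
    using Tk_ge by (auto intro!: clamp_0 simp: ) (smt (verit) Tk_ge)
  have cc: "\<And>k. continuous_on UNIV (c k)" unfolding c_def by (intro continuous_intros)
  have cm: "\<And>k s s'. s \<le> s' \<Longrightarrow> c k s \<le> c k s'" unfolding c_def
    by (intro mult_left_mono clamp_mono d0) auto
  have c0: "\<And>k s. 0 \<le> c k s" unfolding c_def using clamp_bounds d0 by simp
  have cd: "\<And>k s. c k s \<le> d k" unfolding c_def using clamp_bounds d0
    by (simp add: mult_left_le)
  define g where "g = (\<lambda>t. B - lfs c t)"
  have "continuous_on UNIV g" unfolding g_def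
    by (intro continuous_at_imp_continuous_on ballI continuous_intros lfs_isCont[OF z cc])
  moreover have "antimono g" unfolding g_def
    by (intro antimonoI) (simp add: lfs_mono[OF z cm])
  moreover have g0: "0 \<le> g t" for t
  proof -
    have "lfs c t \<le> (\<Sum>k<nat \<lceil>t\<rceil>. d k)" unfolding lfs_def by (intro sum_mono cd)
    also have "\<dots> = B * (1 - (1/2)^nat \<lceil>t\<rceil>)" unfolding d_def by (rule geo_sum)
    also have "\<dots> \<le> B" using B by simp
    finally show ?thesis unfolding g_def by simp
  qed
  moreover have "(g \<longlongrightarrow> 0) at_top"
  proof (rule order_tendstoI)
    fix a :: real assume "a < 0"
    then show "eventually (\<lambda>t. a < g t) at_top" using g0 by (intro always_eventually) (auto intro: less_le_trans)
  next
    fix a :: real assume a: "0 < a"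
    obtain K where K: "(1/2::real)^K < a / B" using real_arch_pow_inv[of "a/B" "1/2::real"] a B by auto
    have "g t < a" if t: "t \<ge> Tk K" for t
    proof -
      have "(\<Sum>k<K+1. d k) = (\<Sum>k<K+1. c k t)"
      proof (intro sum.cong refl)
        fix k assume "k \<in> {..<K+1}"
        then have "Tk k \<le> Tk K" using Tk_mono by auto
        then show "d k = c k t" unfolding c_def using t by (simp add: clamp_1)
      qed
      also have "\<dots> \<le> lfs c t" unfolding lfs_def
        using Tk_ge[of K] t by (intro sum_mono2 c0) (auto, linarith)
      finally have "B * (1 - (1/2)^(K+1)) \<le> lfs c t" unfolding d_def geo_sum .
      then have "g t \<le> B * (1/2)^(K+1)" unfolding g_def by (simp add: algebra_simps)
      also have "\<dots> \<le> B * (1/2)^K" using B by (intro mult_left_mono) (auto simp: power_decreasing)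
      also have "\<dots> < a" using K B by (simp add: field_simps)
      finally show ?thesis .
    qed
    then show "eventually (\<lambda>t. g t < a) at_top" by (auto simp: eventually_at_top_linorder)
  qed
  moreover have "P t (g t)" if tT: "t \<in> T" for t
  proof -
    have ex: "t < Tk (nat \<lceil>t\<rceil>) - 1" using Tk_ge[of "nat \<lceil>t\<rceil>"] by linarith
    define K where "K = (LEAST k. t < Tk k - 1)"
    have KK: "t < Tk K - 1" unfolding K_def by (rule LeastI[of "\<lambda>k. t < Tk k - 1", OF ex])
    have Kle: "K \<le> nat \<lceil>t\<rceil>" unfolding K_def by (rule Least_le[of "\<lambda>k. t < Tk k - 1", OF ex])
    have "lfs c t = (\<Sum>k<K. c k t)" unfolding lfs_def
    proof (intro sum.mono_neutral_right)
      show "\<forall>i\<in>{..<nat \<lceil>t\<rceil>} - {..<K}. c i t = 0"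
      proof
        fix i assume "i \<in> {..<nat \<lceil>t\<rceil>} - {..<K}"
        then have "Tk K \<le> Tk i" using Tk_mono by auto
        then show "c i t = 0" unfolding c_def using KK by (simp add: clamp_0)
      qed
    qed (use Kle in auto)
    also have "\<dots> \<le> (\<Sum>k<K. d k)" by (intro sum_mono cd)
    also have "\<dots> = B * (1 - (1/2)^K)" unfolding d_def by (rule geo_sum)
    finally have gK: "B * (1/2)^K \<le> g t" unfolding g_def by (simp add: algebra_simps)
    show ?thesis
    proof (cases K)
      case 0
      then show ?thesis using gK PB[OF tT] Pm by auto
    next
      case (Suc j)
      then have "\<not> t < Tk j - 1" unfolding K_def using not_less_Least[of j "\<lambda>k. t < Tk k - 1"]
        by (metis K_def lessI)
      then have "t \<ge> \<tau> j" using Tk_tau[of j] by linarith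
      then have "P t (d j)" using tau tT by blast
      moreover have "d j = B * (1/2)^K" unfolding d_def using Suc by simp
      ultimately show ?thesis using gK Pm by metis
    qed
  qed
  ultimately show ?thesis by blast
qed


lemma cs_facts:
  assumes "control_system T UU nU \<phi>"
  shows "T \<subseteq> {0..}" "\<And>a. \<exists>\<tau>\<in>T. a \<le> \<tau>" "\<And>u. u \<in> UU \<Longrightarrow> 0 \<le> nU u"
proof -
  have tdd: "time_domain T" using assms[unfolded control_system_def] by (rule conjunct1)
  have nis: "normed_input_space T UU nU" using assms[unfolded control_system_def] by (rule conjunct1[OF conjunct2])
  have td: "T = {0..} \<or> T = range real" using tdd unfolding time_domain_def .
  then show "T \<subseteq> {0..}" by auto
  show "\<exists>\<tau>\<in>T. a \<le> \<tau>" for a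
    using td
  proof
    assume "T = {0..}" then show ?thesis by (intro bexI[of _ "max a 0"]) auto
  next
    assume "T = range real" then show ?thesis
      by (intro bexI[of _ "real (nat \<lceil>a\<rceil>)"]) (auto simp: real_nat_ceiling_ge)
  qed
  show "u \<in> UU \<Longrightarrow> 0 \<le> nU u" for u
    using conjunct1[OF conjunct2[OF conjunct2[OF conjunct2[OF conjunct2[OF nis[unfolded normed_input_space_def]]]]]] by blast
qed

lemma exp_neg_lim: "((\<lambda>t::real. exp (- t)) \<longlongrightarrow> 0) at_top"
  using filterlim_compose[OF exp_at_bot filterlim_uminus_at_bot_at_top] by simp

lemma ocag_iops:
  assumes cs: "control_system T UU nU \<phi>" and O: "OCAG T UU nU \<phi> h"
  shows "IOpS T UU nU \<phi> h"
proof -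
  obtain \<beta> \<gamma> c where b: "class_KL \<beta>" and g: "class_Kinf \<gamma>" and c: "c \<ge> 0"
    and bd: "\<And>x u t. u \<in> UU \<Longrightarrow> t \<in> T \<Longrightarrow>
        norm (sys_output \<phi> h t x u) \<le> \<beta> (norm x + c) t + \<gamma> (nU u)"
    using O unfolding OCAG_def by blast
  have T0: "\<And>t. t \<in> T \<Longrightarrow> 0 \<le> t" using cs_facts(1)[OF cs] by auto
  have "class_K (\<lambda>r. \<beta> r 0)" using KL_K[OF b] by simp
  then have c0: "0 \<le> \<beta> (2*c) 0" using K_nonneg[of "\<lambda>r. \<beta> r 0" "2*c"] c by simp
  have "norm (sys_output \<phi> h t x u) \<le> \<beta> (2 * norm x) t + \<gamma> (nU u) + \<beta> (2*c) 0"
    if "u \<in> UU" "t \<in> T" for x u t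
  proof -
    have t0: "0 \<le> t" using T0 that by simp
    have "\<beta> (norm x + c) t \<le> \<beta> (2 * norm x) t + \<beta> (2*c) t"
      using K_split[OF KL_K[OF b t0], of "norm x" c] c by simp
    also have "\<beta> (2*c) t \<le> \<beta> (2*c) 0" using KL_antimono[OF b, of "2*c" 0 t] c t0 by simp
    finally show ?thesis using bd[OF that, of x] by simp
  qed
  then show ?thesis unfolding IOpS_def
    using KL_scale2[OF b] g c0 by blast
qed

lemma ocag_ougb:
  assumes cs: "control_system T UU nU \<phi>" and O: "OCAG T UU nU \<phi> h"
  shows "OUGB T UU nU \<phi> h"
proof -
  obtain \<beta> \<gamma> c where b: "class_KL \<beta>" and g: "class_Kinf \<gamma>" and c: "c \<ge> 0"
    and bd: "\<And>x u t. u \<in> UU \<Longrightarrow> t \<in> T \<Longrightarrow>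
        norm (sys_output \<phi> h t x u) \<le> \<beta> (norm x + c) t + \<gamma> (nU u)"
    using O unfolding OCAG_def by blast
  have T0: "\<And>t. t \<in> T \<Longrightarrow> 0 \<le> t" using cs_facts(1)[OF cs] by auto
  have K0: "class_K (\<lambda>r. \<beta> r 0)" using KL_K[OF b] by simp
  then have c0: "0 \<le> \<beta> (2*c) 0" using K_nonneg[of "\<lambda>r. \<beta> r 0" "2*c"] c by simp
  define \<sigma> where "\<sigma> = (\<lambda>r. r + \<beta> (2*r) 0)"
  have s: "class_Kinf \<sigma>" unfolding \<sigma>_def using Kinf_add[OF Kinf_id K_scale2[OF K0]] .
  have "norm (sys_output \<phi> h t x u) \<le> \<sigma> (norm x) + \<gamma> (nU u) + (\<beta> (2*c) 0 + 1)"
    if "u \<in> UU" "t \<in> T" for x u t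
  proof -
    have t0: "0 \<le> t" using T0 that by simp
    have "\<beta> (norm x + c) t \<le> \<beta> (norm x + c) 0" using KL_antimono[OF b, of "norm x + c" 0 t] c t0 by simp
    also have "\<dots> \<le> \<beta> (2 * norm x) 0 + \<beta> (2*c) 0"
      using K_split[OF K0, of "norm x" c] c by simp
    finally show ?thesis using bd[OF that, of x] norm_ge_zero[of x] unfolding \<sigma>_def by linarith
  qed
  then show ?thesis unfolding OUGB_def using s g c0
    by (intro exI[of _ \<sigma>] exI[of _ \<gamma>] exI[of _ "\<beta> (2*c) 0 + 1"]) auto
qed

lemma ocag_oguag:
  assumes cs: "control_system T UU nU \<phi>" and O: "OCAG T UU nU \<phi> h"
  shows "OGUAG T UU nU \<phi> h"
proof -
  obtain \<beta> \<gamma> c where b: "class_KL \<beta>" and g: "class_Kinf \<gamma>" and c: "c \<ge> 0"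
    and bd: "\<And>x u t. u \<in> UU \<Longrightarrow> t \<in> T \<Longrightarrow>
        norm (sys_output \<phi> h t x u) \<le> \<beta> (norm x + c) t + \<gamma> (nU u)"
    using O unfolding OCAG_def by blast
  have T0: "\<And>t. t \<in> T \<Longrightarrow> 0 \<le> t" using cs_facts(1)[OF cs] by auto
  have "\<exists>\<tau>\<in>T. \<forall>x u t. norm x < r \<and> u \<in> UU \<and> t \<in> T \<and> t \<ge> \<tau>
        \<longrightarrow> norm (sys_output \<phi> h t x u) \<le> \<epsilon> + \<gamma> (nU u)" if e: "\<epsilon> > 0" and r: "r > 0" for \<epsilon> r
  proof -
    have "class_L (\<lambda>t. \<beta> (r + c) t)" using b r c unfolding class_KL_def by auto
    then have "((\<lambda>t. \<beta> (r + c) t) \<longlongrightarrow> 0) at_top" unfolding class_L_def by blast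
    then have "eventually (\<lambda>t. \<beta> (r + c) t < \<epsilon>) at_top" using e by (rule order_tendstoD)
    then obtain A where A: "\<And>t. t \<ge> A \<Longrightarrow> \<beta> (r + c) t < \<epsilon>" by (auto simp: eventually_at_top_linorder)
    obtain \<tau> where \<tau>: "\<tau> \<in> T" "A \<le> \<tau>" using cs_facts(2)[OF cs, of A] by blast
    have "norm (sys_output \<phi> h t x u) \<le> \<epsilon> + \<gamma> (nU u)"
      if "norm x < r" "u \<in> UU" "t \<in> T" "t \<ge> \<tau>" for x u t
    proof -
      have t0: "0 \<le> t" using T0 that by simp
      have "\<beta> (norm x + c) t \<le> \<beta> (r + c) t" using K_mono[OF KL_K[OF b t0], of "norm x + c" "r + c"] that c by simp
      also have "\<dots> < \<epsilon>" using A \<tau> that by simp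
      finally show ?thesis using bd[OF that(2,3), of x] by simp
    qed
    then show ?thesis using \<tau> by blast
  qed
  then show ?thesis unfolding OGUAG_def using g by blast
qed

lemma oguag_ouag: "OGUAG T UU nU \<phi> h \<Longrightarrow> OUAG T UU nU \<phi> h"
proof -
  assume "OGUAG T UU nU \<phi> h"
  then obtain \<gamma> where g: "class_Kinf \<gamma>" and G: "\<And>\<epsilon> r. \<epsilon> > 0 \<Longrightarrow> r > 0 \<Longrightarrow> \<exists>\<tau>\<in>T. \<forall>x u t. norm x < r \<and> u \<in> UU \<and> t \<in> T \<and> t \<ge> \<tau>
        \<longrightarrow> norm (sys_output \<phi> h t x u) \<le> \<epsilon> + \<gamma> (nU u)"
    unfolding OGUAG_def by blast
  have "\<exists>\<tau>\<in>T. \<forall>x u t. norm x < r \<and> u \<in> UU \<and> nU u < s \<and> t \<in> T \<and> t \<ge> \<tau>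
        \<longrightarrow> norm (sys_output \<phi> h t x u) \<le> \<epsilon> + \<gamma> (nU u)" if "\<epsilon> > 0" "r > 0" for \<epsilon> r s
  proof -
    from G[OF that] obtain \<tau> where "\<tau> \<in> T" "\<forall>x u t. norm x < r \<and> u \<in> UU \<and> t \<in> T \<and> t \<ge> \<tau>
        \<longrightarrow> norm (sys_output \<phi> h t x u) \<le> \<epsilon> + \<gamma> (nU u)" by blast
    then show ?thesis by blast
  qed
  then show ?thesis unfolding OUAG_def using g by blast
qed

lemma ougb_bors:
  assumes cs: "control_system T UU nU \<phi>" and O: "OUGB T UU nU \<phi> h"
  shows "BORS T UU nU \<phi> h"
proof -
  obtain \<sigma> \<gamma> c where s: "class_Kinf \<sigma>" and g: "class_Kinf \<gamma>"
    and bd: "\<And>x u t. u \<in> UU \<Longrightarrow> t \<in> T \<Longrightarrow> norm (sys_output \<phi> h t x u) \<le> \<sigma> (norm x) + \<gamma> (nU u) + c"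
    using O unfolding OUGB_def by blast
  have "norm (sys_output \<phi> h t x u) \<le> \<sigma> C + \<gamma> C + c"
    if "norm x < C" "u \<in> UU" "nU u < C" "t \<in> T" for C x u t
  proof -
    have "0 \<le> nU u" using cs_facts(3)[OF cs] that by blast
    then have "\<sigma> (norm x) \<le> \<sigma> C" "\<gamma> (nU u) \<le> \<gamma> C"
      using K_mono s g that unfolding class_Kinf_def by auto
    then show ?thesis using bd[OF that(2,4), of x] by simp
  qed
  then show ?thesis unfolding BORS_def by blast
qed


lemma ouag_bors:
  assumes cs: "control_system T UU nU \<phi>" and O: "OUAG T UU nU \<phi> h" and BO: "BORS T UU nU \<phi> h"
  shows "OGUAG T UU nU \<phi> h \<and> OUGB T UU nU \<phi> h"
proof -
  note nU0 = cs_facts(3)[OF cs]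
  obtain \<gamma> where g: "class_Kinf \<gamma>" and G: "\<And>\<epsilon> r s. \<epsilon> > 0 \<Longrightarrow> r > 0 \<Longrightarrow> s > 0 \<Longrightarrow> \<exists>\<tau>\<in>T. \<forall>x u t. norm x < r \<and> u \<in> UU \<and> nU u < s \<and> t \<in> T \<and> t \<ge> \<tau>
        \<longrightarrow> norm (sys_output \<phi> h t x u) \<le> \<epsilon> + \<gamma> (nU u)"
    using O unfolding OUAG_def by blast
  have gK: "class_K \<gamma>" using g unfolding class_Kinf_def by blast
  have "\<exists>M. \<forall>x u t. norm x < real n + 1 \<and> u \<in> UU \<and> nU u < real n + 1 \<and> t \<in> T
      \<longrightarrow> norm (sys_output \<phi> h t x u) \<le> M" for n :: nat
  proof -
    obtain \<tau> where \<tau>: "\<tau> \<in> T" and t1: "\<forall>x u t. norm x < real n + 1 \<and> u \<in> UU \<and> nU u < real n + 1 \<and> t \<in> T \<and> t \<ge> \<tau>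
        \<longrightarrow> norm (sys_output \<phi> h t x u) \<le> 1 + \<gamma> (nU u)"
      using G[of 1 "real n + 1" "real n + 1"] by auto
    obtain M where M: "\<forall>x u t. norm x < real n + 1 \<and> u \<in> UU \<and> nU u < real n + 1 \<and> t \<in> T \<and> t < \<tau>
        \<longrightarrow> norm (sys_output \<phi> h t x u) \<le> M"
      using BO \<tau> unfolding BORS_def by (metis add_pos_pos of_nat_0_le_iff zero_less_one le_add_same_cancel2 less_le_trans)
    have "norm (sys_output \<phi> h t x u) \<le> max M (1 + \<gamma> (real n + 1))"
      if "norm x < real n + 1" "u \<in> UU" "nU u < real n + 1" "t \<in> T" for x u t
    proof (cases "t < \<tau>")
      case True then show ?thesis using M that by fastforce
    next
      case False
      then have "norm (sys_output \<phi> h t x u) \<le> 1 + \<gamma> (nU u)" using t1 that by auto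
      moreover have "\<gamma> (nU u) \<le> \<gamma> (real n + 1)" using K_mono[OF gK] nU0 that by auto
      ultimately show ?thesis by simp
    qed
    then show ?thesis by blast
  qed
  then obtain M where M: "\<And>n x u t. norm x < real n + 1 \<Longrightarrow> u \<in> UU \<Longrightarrow> nU u < real n + 1 \<Longrightarrow> t \<in> T
      \<Longrightarrow> norm (sys_output \<phi> h t x u) \<le> M n" by metis
  obtain \<sigma> where s: "class_Kinf \<sigma>" and sM: "\<And>r n. real n + 1 \<le> r \<Longrightarrow> \<bar>M (n+1)\<bar> \<le> \<sigma> r"
    using Kinf_majorant[of "\<lambda>n. \<bar>M (n+1)\<bar>"] by auto
  have sK: "class_K \<sigma>" using s unfolding class_Kinf_def by blast
  define c where "c = \<bar>M 0\<bar> + 1"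
  have bd: "norm (sys_output \<phi> h t x u) \<le> \<sigma> (norm x) + \<sigma> (nU u) + c"
    if u: "u \<in> UU" and t: "t \<in> T" for x u t
  proof -
    define R where "R = max (norm x) (nU u)"
    have R0: "0 \<le> R" unfolding R_def by (simp add: le_max_iff_disj)
    define m where "m = nat \<lfloor>R\<rfloor>"
    have "norm x < real m + 1" "nU u < real m + 1" unfolding m_def R_def by linarith+
    then have y: "norm (sys_output \<phi> h t x u) \<le> M m" using M u t by blast
    have s1: "0 \<le> \<sigma> (norm x)" "0 \<le> \<sigma> (nU u)" using K_nonneg[OF sK] nU0 u by auto
    have sR: "\<sigma> R \<le> \<sigma> (norm x) + \<sigma> (nU u)" unfolding R_def using s1 by (cases "norm x \<le> nU u") (auto simp: max_def)
    show ?thesis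
    proof (cases m)
      case 0
      then show ?thesis using y s1 unfolding c_def by simp
    next
      case (Suc k)
      then have "real k + 1 \<le> R" unfolding m_def using R0 by linarith
      then have "\<bar>M (k+1)\<bar> \<le> \<sigma> R" by (rule sM)
      then show ?thesis using y sR Suc unfolding c_def by simp
    qed
  qed
  have c0: "c > 0" unfolding c_def by simp
  have OUGB: "OUGB T UU nU \<phi> h" unfolding OUGB_def using s c0 bd by blast
  define \<gamma>' where "\<gamma>' = (\<lambda>v. v + (\<gamma> v + \<sigma> v))"
  have g': "class_Kinf \<gamma>'" unfolding \<gamma>'_def by (rule Kinf_add[OF Kinf_id K_add[OF gK sK]])
  have "\<exists>\<tau>\<in>T. \<forall>x u t. norm x < r \<and> u \<in> UU \<and> t \<in> T \<and> t \<ge> \<tau>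
        \<longrightarrow> norm (sys_output \<phi> h t x u) \<le> \<epsilon> + \<gamma>' (nU u)" if e: "\<epsilon> > 0" and r: "r > 0" for \<epsilon> r
  proof -
    define s where "s = \<sigma> r + c"
    have s0: "s > 0" unfolding s_def using K_nonneg[OF sK, of r] r c0 by simp
    obtain \<tau> where \<tau>: "\<tau> \<in> T" and t1: "\<forall>x u t. norm x < r \<and> u \<in> UU \<and> nU u < s \<and> t \<in> T \<and> t \<ge> \<tau>
        \<longrightarrow> norm (sys_output \<phi> h t x u) \<le> \<epsilon> + \<gamma> (nU u)"
      using G[OF e r s0] by blast
    have "norm (sys_output \<phi> h t x u) \<le> \<epsilon> + \<gamma>' (nU u)"
      if "norm x < r" "u \<in> UU" "t \<in> T" "t \<ge> \<tau>" for x u t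
    proof -
      have n0: "0 \<le> nU u" using nU0 that by blast
      have p: "0 \<le> \<gamma> (nU u)" "0 \<le> \<sigma> (nU u)" using K_nonneg[OF gK n0] K_nonneg[OF sK n0] by auto
      show ?thesis
      proof (cases "nU u < s")
        case True
        then show ?thesis using t1 that p n0 unfolding \<gamma>'_def by fastforce
      next
        case False
        have "\<sigma> (norm x) \<le> \<sigma> r" using K_mono[OF sK] that by simp
        then show ?thesis using bd[OF that(2,3), of x] False p e unfolding \<gamma>'_def s_def by simp
      qed
    qed
    then show ?thesis using \<tau> by blast
  qed
  then have "OGUAG T UU nU \<phi> h" unfolding OGUAG_def using g' by blast
  then show ?thesis using OUGB by blast
qed



lemma oguag_ougb_ocag:
  fixes \<phi> :: "real \<Rightarrow> 'x::real_normed_vector \<Rightarrow> (real \<Rightarrow> 'u::real_vector) \<Rightarrow> 'x"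
    and h :: "'x \<Rightarrow> 'u \<Rightarrow> 'y::real_normed_vector"
  assumes cs: "control_system T UU nU \<phi>" and O1: "OGUAG T UU nU \<phi> h" and O2: "OUGB T UU nU \<phi> h"
  shows "OCAG T UU nU \<phi> h"
proof -
  note nU0 = cs_facts(3)[OF cs]
  have T0: "\<And>t. t \<in> T \<Longrightarrow> 0 \<le> t" using cs_facts(1)[OF cs] by auto
  obtain \<gamma>1 where g1: "class_Kinf \<gamma>1" and G: "\<And>\<epsilon> r. \<epsilon> > 0 \<Longrightarrow> r > 0 \<Longrightarrow> \<exists>\<tau>\<in>T. \<forall>x u t. norm x < r \<and> u \<in> UU \<and> t \<in> T \<and> t \<ge> \<tau>
        \<longrightarrow> norm (sys_output \<phi> h t x u) \<le> \<epsilon> + \<gamma>1 (nU u)"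
    using O1 unfolding OGUAG_def by blast
  obtain \<sigma> \<gamma>2 c0 where s: "class_Kinf \<sigma>" and g2: "class_Kinf \<gamma>2" and c0: "c0 > 0"
    and bd: "\<And>x u t. u \<in> UU \<Longrightarrow> t \<in> T \<Longrightarrow> norm (sys_output \<phi> h t x u) \<le> \<sigma> (norm x) + \<gamma>2 (nU u) + c0"
    using O2 unfolding OUGB_def by blast
  have g1K: "class_K \<gamma>1" and g2K: "class_K \<gamma>2" and sK: "class_K \<sigma>"
    using g1 g2 s unfolding class_Kinf_def by auto
  define \<gamma> where "\<gamma> = (\<lambda>v. \<gamma>1 v + \<gamma>2 v)"
  have g: "class_Kinf \<gamma>" unfolding \<gamma>_def by (rule Kinf_add[OF g1 g2K])
  define P where "P = (\<lambda>(n::nat) t b. \<forall>(x::'x) u. norm x \<le> real n + 1 \<and> u \<in> UU \<longrightarrow>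
      norm (sys_output \<phi> h t x u) \<le> b + \<gamma> (nU u))"
  have exg: "\<exists>g. continuous_on UNIV g \<and> antimono g \<and> (\<forall>t. 0 \<le> g t) \<and> (g \<longlongrightarrow> 0) at_top
           \<and> (\<forall>t\<in>T. P n t (g t))" for n
  proof (rule L_majorant)
    show B: "0 < \<sigma> (real n + 1) + c0" using K_nonneg[OF sK, of "real n + 1"] c0 by simp
    show "P n t (\<sigma> (real n + 1) + c0)" if t: "t \<in> T" for t
      unfolding P_def
    proof (intro allI impI)
      fix x :: 'x and u assume xu: "norm x \<le> real n + 1 \<and> u \<in> UU"
      have "\<sigma> (norm x) \<le> \<sigma> (real n + 1)" using K_mono[OF sK] xu by simp
      moreover have "0 \<le> \<gamma>1 (nU u)" using K_nonneg[OF g1K] nU0 xu by simp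
      ultimately show "norm (sys_output \<phi> h t x u) \<le> \<sigma> (real n + 1) + c0 + \<gamma> (nU u)"
        using bd[of u t x] xu t unfolding \<gamma>_def by simp
    qed
    show "P n t b'" if "P n t b" "b \<le> b'" for t b b'
      using that unfolding P_def by (meson add_le_cancel_right order_trans)
    show "\<exists>\<tau>. \<forall>t\<in>T. t \<ge> \<tau> \<longrightarrow> P n t \<epsilon>" if e: "\<epsilon> > 0" for \<epsilon>
    proof -
      obtain \<tau> where "\<tau> \<in> T" and t1: "\<forall>x u t. norm x < real n + 2 \<and> u \<in> UU \<and> t \<in> T \<and> t \<ge> \<tau>
        \<longrightarrow> norm (sys_output \<phi> h t x u) \<le> \<epsilon> + \<gamma>1 (nU u)" using G[OF e, of "real n + 2"] by auto
      have "P n t \<epsilon>" if "t \<in> T" "t \<ge> \<tau>" for t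
        unfolding P_def
      proof (intro allI impI)
        fix x :: 'x and u assume xu: "norm x \<le> real n + 1 \<and> u \<in> UU"
        have "0 \<le> \<gamma>2 (nU u)" using K_nonneg[OF g2K] nU0 xu by simp
        moreover have "norm (sys_output \<phi> h t x u) \<le> \<epsilon> + \<gamma>1 (nU u)"
          using t1 xu that by simp
        ultimately show "norm (sys_output \<phi> h t x u) \<le> \<epsilon> + \<gamma> (nU u)"
          unfolding \<gamma>_def by simp
      qed
      then show ?thesis by blast
    qed
  qed
  have exg': "\<forall>n. \<exists>g. continuous_on UNIV g \<and> antimono g \<and> (\<forall>t. 0 \<le> g t) \<and> (g \<longlongrightarrow> 0) at_top
           \<and> (\<forall>t\<in>T. P n t (g t))" by (intro allI exg)
  from choice[OF exg'] obtain Gf where Gall: "\<forall>n. continuous_on UNIV (Gf n) \<and> antimono (Gf n) \<and> (\<forall>t. 0 \<le> Gf n t) \<and> (Gf n \<longlongrightarrow> 0) at_top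
           \<and> (\<forall>t\<in>T. P n t (Gf n t))" by blast
  have Gc: "\<And>n. continuous_on UNIV (Gf n)" and Ga: "\<And>n. antimono (Gf n)"
    and G0: "\<And>n t. 0 \<le> Gf n t" and Gl: "\<And>n. (Gf n \<longlongrightarrow> 0) at_top"
    and GP: "\<And>n t. t \<in> T \<Longrightarrow> P n t (Gf n t)" using Gall by blast+
  define c where "c = (\<lambda>t n s. clamp (s - real n) * Gf n t)"
  have z: "\<And>t k s. s \<le> real k \<Longrightarrow> c t k s = 0" unfolding c_def by (simp add: clamp_0)
  have cc: "\<And>t k. continuous_on UNIV (c t k)" unfolding c_def by (intro continuous_intros)
  have cm: "\<And>t k s s'. s \<le> s' \<Longrightarrow> c t k s \<le> c t k s'" unfolding c_def
    by (intro mult_right_mono clamp_mono G0) auto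
  have cnn: "\<And>t k s. 0 \<le> c t k s" unfolding c_def using clamp_bounds G0 by simp
  define \<beta> where "\<beta> = (\<lambda>s t. s * exp (- t) + lfs (c t) s)"
  have KL: "class_KL \<beta>" unfolding class_KL_def
  proof (intro conjI allI impI)
    fix t :: real assume "0 \<le> t"
    show "class_K (\<lambda>r. \<beta> r t)" unfolding class_K_def
    proof (intro conjI)
      show "continuous_on {0..} (\<lambda>r. \<beta> r t)" unfolding \<beta>_def
        by (intro continuous_at_imp_continuous_on ballI continuous_intros lfs_isCont[OF z cc])
      show "strict_mono_on {0..} (\<lambda>r. \<beta> r t)" unfolding \<beta>_def
        by (intro strict_mono_onI add_less_le_mono lfs_mono[OF z cm]) auto
      show "\<beta> 0 t = 0" unfolding \<beta>_def lfs_def by simp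
    qed
  next
    fix r :: real assume "0 < r"
    have eq: "(\<lambda>t. \<beta> r t) = (\<lambda>t. r * exp (- t) + (\<Sum>k<nat \<lceil>r\<rceil>. clamp (r - real k) * Gf k t))"
      unfolding \<beta>_def lfs_def c_def by simp
    show "class_L (\<lambda>t. \<beta> r t)" unfolding class_L_def eq
    proof (intro conjI)
      have "continuous_on {0..} (Gf k)" for k using Gc continuous_on_subset by blast
      then show "continuous_on {0..} (\<lambda>t. r * exp (- t) + (\<Sum>k<nat \<lceil>r\<rceil>. clamp (r - real k) * Gf k t))"
        by (intro continuous_intros) auto
      show "antimono_on {0..} (\<lambda>t. r * exp (- t) + (\<Sum>k<nat \<lceil>r\<rceil>. clamp (r - real k) * Gf k t))"
      proof (intro monotone_onI)
        fix t t' :: real assume "t \<in> {0..}" "t' \<in> {0..}" "t \<le> t'"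
        have "r * exp (- t') \<le> r * exp (- t)" using \<open>0 < r\<close> \<open>t \<le> t'\<close> by simp
        moreover have "(\<Sum>k<nat \<lceil>r\<rceil>. clamp (r - real k) * Gf k t') \<le> (\<Sum>k<nat \<lceil>r\<rceil>. clamp (r - real k) * Gf k t)"
          using Ga \<open>t \<le> t'\<close> clamp_bounds by (intro sum_mono mult_left_mono) (auto dest: antimonoD)
        ultimately show "r * exp (- t') + (\<Sum>k<nat \<lceil>r\<rceil>. clamp (r - real k) * Gf k t')
            \<le> r * exp (- t) + (\<Sum>k<nat \<lceil>r\<rceil>. clamp (r - real k) * Gf k t)" by simp
      qed
      have "((\<lambda>t. r * exp (- t) + (\<Sum>k<nat \<lceil>r\<rceil>. clamp (r - real k) * Gf k t)) \<longlongrightarrow> r * 0 + (\<Sum>k<nat \<lceil>r\<rceil>. clamp (r - real k) * 0)) at_top"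
        using Gl exp_neg_lim by (intro tendsto_intros) auto
      then show "((\<lambda>t. r * exp (- t) + (\<Sum>k<nat \<lceil>r\<rceil>. clamp (r - real k) * Gf k t)) \<longlongrightarrow> 0) at_top" by simp
    qed
  qed
  have "norm (sys_output \<phi> h t x u) \<le> \<beta> (norm x + 1) t + \<gamma> (nU u)"
    if u: "u \<in> UU" and t: "t \<in> T" for x u t
  proof -
    define n where "n = nat \<lfloor>norm x\<rfloor>"
    have "norm x \<le> real n + 1" unfolding n_def by linarith
    then have "norm (sys_output \<phi> h t x u) \<le> Gf n t + \<gamma> (nU u)" using GP[OF t, of n] u unfolding P_def by blast
    moreover have nx: "real n \<le> norm x"
    proof -
      have "0 \<le> \<lfloor>norm x\<rfloor>" by simp
      then have "real n = of_int \<lfloor>norm x\<rfloor>" unfolding n_def by (rule of_nat_nat)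
      then show ?thesis by linarith
    qed
    moreover have "c t n (norm x + 1) = Gf n t" unfolding c_def
      using clamp_1[of "norm x + 1 - real n"] nx by simp
    moreover have "c t n (norm x + 1) \<le> lfs (c t) (norm x + 1)"
      using nx by (intro lfs_ge cnn) simp
    moreover have "0 \<le> (norm x + 1) * exp (- t)" by simp
    ultimately show ?thesis unfolding \<beta>_def by linarith
  qed
  then show ?thesis unfolding OCAG_def using KL g
    by (intro exI[of _ \<beta>] exI[of _ \<gamma>] exI[of _ "1::real"]) auto
qed

theorem proposition1:
  fixes T :: "real set"
    and UU :: "(real \<Rightarrow> 'u::real_vector) set"
    and nU :: "(real \<Rightarrow> 'u) \<Rightarrow> real"
    and \<phi> :: "real \<Rightarrow> 'x::real_normed_vector \<Rightarrow> (real \<Rightarrow> 'u) \<Rightarrow> 'x"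
    and h :: "'x \<Rightarrow> 'u \<Rightarrow> 'y::real_normed_vector"
  assumes "control_system T UU nU \<phi>"
  shows "((OUAG T UU nU \<phi> h \<and> BORS T UU nU \<phi> h) \<longleftrightarrow> (OGUAG T UU nU \<phi> h \<and> OUGB T UU nU \<phi> h))
       \<and> ((OGUAG T UU nU \<phi> h \<and> OUGB T UU nU \<phi> h) \<longleftrightarrow> OCAG T UU nU \<phi> h)
       \<and> (OCAG T UU nU \<phi> h \<longrightarrow> IOpS T UU nU \<phi> h)"
proof -
  have a: "(OUAG T UU nU \<phi> h \<and> BORS T UU nU \<phi> h) \<longleftrightarrow> (OGUAG T UU nU \<phi> h \<and> OUGB T UU nU \<phi> h)"
    using ouag_bors[OF assms] oguag_ouag[of T UU nU \<phi> h] ougb_bors[OF assms] by blast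
  have b: "(OGUAG T UU nU \<phi> h \<and> OUGB T UU nU \<phi> h) \<longleftrightarrow> OCAG T UU nU \<phi> h"
    using oguag_ougb_ocag[OF assms] ocag_oguag[OF assms] ocag_ougb[OF assms] by blast
  have c: "OCAG T UU nU \<phi> h \<longrightarrow> IOpS T UU nU \<phi> h"
    using ocag_iops[OF assms] by blast
  show ?thesis using a b c by blast
qed

end
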